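(* Let $\mathcal{G}=(\mathcal{V},\mathcal{E},\mathbf{W})$ be a weighted undirected graph with node set $\mathcal{V}=\{1,\dots,N\}$ and symmetric nonnegative weights $W_{i,j}$, equipped with an arbitrary fixed orientation. Let $\mathcal{F}=\{\mathcal{C}_1,\dots,\mathcal{C}_{|\mathcal{F}|}\}$ be a partition of $\mathcal{V}$ into pairwise disjoint clusters, let $x:\mathcal{V}\to\mathbb{R}$ be any graph signal, and let $\mathcal{M}\subseteq\mathcal{V}$ be a sampling set satisfying NNSP-$\mathcal{F}$ with $\kappa=2$. Then every solution $\hat{x}$ of $$\min_{\tilde{x}:\mathcal{V}\to\mathbb{R}} \|\tilde{x}\|_{\rm TV}\quad\text{subject to}\quad \tilde{x}[i]=x[i]\ \text{for all } i\in\mathcal{M}$$ satisfies $$\|\hat{x}-x\|_{\rm TV}\le 6\min_{\mathbf{a}\in\mathbb{R}^{|\mathcal{F}|}}\Big\|x-\sum_{\mathcal{C}\in\mathcal{F}} a_{\mathcal{C}}\mathcal{I}_{\mathcal{C}}\Big\|_{\rm TV}.$$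
   Context: $\mathcal{I}_{\mathcal{C}}[i]=1$ if $i\in\mathcal{C}$ and $0$ otherwise. For a graph signal $x:\mathcal{V}\to\mathbb{R}$ the total variation is $\|x\|_{\rm TV}=\sum_{\{i,j\}\in\mathcal{E}} W_{i,j}|x[i]-x[j]|$. The orientation declares for each edge $e=\{i,j\}$ one endpoint the head $e^{+}$ and the other the tail $e^{-}$; $\mathcal{N}^{+}(i)$ is the set of neighbours $j$ of $i$ such that $i$ is the head of $\{i,j\}$, and $\mathcal{N}^{-}(i)$ the set of neighbours $j$ such that $i$ is the tail. The boundary of the partition is $\partial\mathcal{F}=\{\{i,j\}\in\mathcal{E}: i\in\mathcal{C}_l, j\in\mathcal{C}_{l'}, l\neq l'\}$. A flow with demands $g:\mathcal{V}\to\mathbb{R}$ is a map $f:\mathcal{E}\to\mathbb{R}$ with $\sum_{j\in\mathcal{N}^{+}(i)} f[\{i,j\}]-\sum_{j\in\mathcal{N}^{-}(i)} f[\{i,j\}]=g[i]$ for every $i\in\mathcal{V}$. "$\mathcal{M}$ satisfies NNSP-$\mathcal{F}$ with $\kappa=2$" means: for every signature $\sigma\in\{-1,1\}^{\partial\mathcal{F}}$ there is a flow $f$ whose demands satisfy $g[i]=0$ for all $i\notin\mathcal{M}$, with $f[e]=2\sigma_e W_e$ for every $e\in\partial\mathcal{F}$ and $|f[e]|\le W_e$ for every $e\in\mathcal{E}\setminus\partial\mathcal{F}$. *)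

theory Defs
  imports "HOL-Analysis.Analysis"
begin

definition is_graph :: "nat \<Rightarrow> nat set set \<Rightarrow> (nat \<Rightarrow> nat \<Rightarrow> real) \<Rightarrow> bool" where
  "is_graph N E W \<longleftrightarrow>
     (\<forall>e\<in>E. \<exists>i j. i \<in> {1..N} \<and> j \<in> {1..N} \<and> i \<noteq> j \<and> e = {i, j}) \<and>
     (\<forall>i j. W i j = W j i) \<and> (\<forall>i j. 0 \<le> W i j)"

definition edge_weight :: "(nat \<Rightarrow> nat \<Rightarrow> real) \<Rightarrow> nat set \<Rightarrow> real" where
  "edge_weight W e = W (Min e) (Max e)"

definition tv :: "nat set set \<Rightarrow> (nat \<Rightarrow> nat \<Rightarrow> real) \<Rightarrow> (nat \<Rightarrow> real) \<Rightarrow> real" where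
  "tv E W x = (\<Sum>e\<in>E. edge_weight W e * \<bar>x (Min e) - x (Max e)\<bar>)"

definition is_orientation :: "nat set set \<Rightarrow> (nat set \<Rightarrow> nat) \<Rightarrow> bool" where
  "is_orientation E head \<longleftrightarrow> (\<forall>e\<in>E. head e \<in> e)"

definition nbr_plus :: "nat set set \<Rightarrow> (nat set \<Rightarrow> nat) \<Rightarrow> nat \<Rightarrow> nat set" where
  "nbr_plus E head i = {j. {i, j} \<in> E \<and> head {i, j} = i}"

definition nbr_minus :: "nat set set \<Rightarrow> (nat set \<Rightarrow> nat) \<Rightarrow> nat \<Rightarrow> nat set" where
  "nbr_minus E head i = {j. {i, j} \<in> E \<and> head {i, j} \<noteq> i}"

definition demand :: "nat set set \<Rightarrow> (nat set \<Rightarrow> nat) \<Rightarrow> (nat set \<Rightarrow> real) \<Rightarrow> nat \<Rightarrow> real" where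
  "demand E head f i =
     (\<Sum>j\<in>nbr_plus E head i. f {i, j}) - (\<Sum>j\<in>nbr_minus E head i. f {i, j})"

definition is_partition :: "nat set \<Rightarrow> nat set set \<Rightarrow> bool" where
  "is_partition V F \<longleftrightarrow> \<Union>F = V \<and> {} \<notin> F \<and>
     (\<forall>C\<in>F. \<forall>C'\<in>F. C \<noteq> C' \<longrightarrow> C \<inter> C' = {})"

definition boundary :: "nat set set \<Rightarrow> nat set set \<Rightarrow> nat set set" where
  "boundary E F = {e\<in>E. \<exists>i j C C'. e = {i, j} \<and> C \<in> F \<and> C' \<in> F \<and> C \<noteq> C' \<and> i \<in> C \<and> j \<in> C'}"

definition NNSP :: "nat \<Rightarrow> nat set set \<Rightarrow> (nat \<Rightarrow> nat \<Rightarrow> real) \<Rightarrow> (nat set \<Rightarrow> nat)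
     \<Rightarrow> nat set set \<Rightarrow> nat set \<Rightarrow> real \<Rightarrow> bool" where
  "NNSP N E W head F M \<kappa> \<longleftrightarrow>
     (\<forall>\<sigma> :: nat set \<Rightarrow> real. (\<forall>e\<in>boundary E F. \<sigma> e \<in> {-1, 1}) \<longrightarrow>
        (\<exists>f :: nat set \<Rightarrow> real.
            (\<forall>i\<in>{1..N}. i \<notin> M \<longrightarrow> demand E head f i = 0) \<and>
            (\<forall>e\<in>boundary E F. f e = \<kappa> * \<sigma> e * edge_weight W e) \<and>
            (\<forall>e\<in>E - boundary E F. \<bar>f e\<bar> \<le> edge_weight W e)))"

end

theory Submission
  imports Defs
begin

lemma edge_facts:
  assumes g: "is_graph N E W" and e: "e \<in> E"
  shows "Min e \<in> {1..N}" "Max e \<in> {1..N}" "Min e \<noteq> Max e" "e = {Min e, Max e}"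
    "e \<subseteq> {1..N}"
proof -
  obtain i j where ij: "i \<in> {1..N}" "j \<in> {1..N}" "i \<noteq> j" "e = {i, j}"
    using g e unfolding is_graph_def by blast
  show "Min e \<in> {1..N}" "Max e \<in> {1..N}" "Min e \<noteq> Max e" "e = {Min e, Max e}"
    "e \<subseteq> {1..N}"
    using ij by (auto simp: min_def max_def)
qed

lemma finite_E:
  assumes g: "is_graph N E W" shows "finite E"
proof -
  have "E \<subseteq> Pow {1..N}" using edge_facts(5)[OF g] by blast
  then show ?thesis by (rule finite_subset) simp
qed

lemma nbr_sum:
  assumes g: "is_graph N E W" and fin: "finite E"
  shows "(\<Sum>j\<in>{j. {i, j} \<in> E \<and> P {i,j}}. f {i, j}) = (\<Sum>e\<in>{e\<in>E. i \<in> e \<and> P e}. f e)"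
proof -
  let ?A = "{j. {i, j} \<in> E \<and> P {i,j}}"
  have inj: "inj_on (\<lambda>j. {i, j}) ?A"
    by (auto simp: inj_on_def doubleton_eq_iff)
  have img: "(\<lambda>j. {i, j}) ` ?A = {e\<in>E. i \<in> e \<and> P e}"
  proof
    show "(\<lambda>j. {i, j}) ` ?A \<subseteq> {e\<in>E. i \<in> e \<and> P e}" by auto
    show "{e\<in>E. i \<in> e \<and> P e} \<subseteq> (\<lambda>j. {i, j}) ` ?A"
    proof
      fix e assume "e \<in> {e\<in>E. i \<in> e \<and> P e}"
      then have eE: "e \<in> E" and ie: "i \<in> e" and Pe: "P e" by auto
      obtain a b where ab: "e = {a, b}" using g eE unfolding is_graph_def by blast
      show "e \<in> (\<lambda>j. {i, j}) ` ?A"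
      proof (cases "i = a")
        case True
        then show ?thesis using ab eE Pe by (auto intro!: image_eqI[where x=b])
      next
        case False
        then have "i = b" using ie ab by auto
        then show ?thesis using ab eE Pe by (auto intro!: image_eqI[where x=a] simp: insert_commute)
      qed
    qed
  qed
  have "(\<Sum>e\<in>(\<lambda>j. {i, j}) ` ?A. f e) = (\<Sum>j\<in>?A. f {i, j})"
    using sum.reindex[OF inj] by simp
  then show ?thesis using img by simp
qed

lemma demand_eq:
  assumes g: "is_graph N E W"
  shows "demand E head f i =
    (\<Sum>e\<in>E. if i \<in> e then (if head e = i then f e else - f e) else 0)"
proof -
  have fin: "finite E" using finite_E[OF g] .
  have p: "(\<Sum>j\<in>nbr_plus E head i. f {i, j}) = (\<Sum>e\<in>{e\<in>E. i \<in> e \<and> head e = i}. f e)"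
    unfolding nbr_plus_def using nbr_sum[OF g fin, where i=i and P="\<lambda>e. head e = i" and f=f] by simp
  have m: "(\<Sum>j\<in>nbr_minus E head i. f {i, j}) = (\<Sum>e\<in>{e\<in>E. i \<in> e \<and> head e \<noteq> i}. f e)"
    unfolding nbr_minus_def using nbr_sum[OF g fin, where i=i and P="\<lambda>e. head e \<noteq> i" and f=f] by simp
  have "(\<Sum>e\<in>E. if i \<in> e then (if head e = i then f e else - f e) else 0)
     = (\<Sum>e\<in>E. (if i \<in> e \<and> head e = i then f e else 0) - (if i \<in> e \<and> head e \<noteq> i then f e else 0))"
    by (rule sum.cong) auto
  also have "\<dots> = (\<Sum>e\<in>{e\<in>E. i \<in> e \<and> head e = i}. f e) - (\<Sum>e\<in>{e\<in>E. i \<in> e \<and> head e \<noteq> i}. f e)"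
    by (simp add: sum_subtractf sum.inter_filter[OF fin])
  finally show ?thesis unfolding demand_def p m by simp
qed

lemma flow_identity:
  assumes g: "is_graph N E W" and o: "is_orientation E head"
  shows "(\<Sum>i\<in>{1..N}. u i * demand E head f i) =
    (\<Sum>e\<in>E. f e * (if head e = Min e then 1 else -1) * (u (Min e) - u (Max e)))"
proof -
  define c where "c e i = (if i \<in> e then (if head e = i then f e else - f e) else (0::real))" for e i
  have fin: "finite E" using finite_E[OF g] .
  have "(\<Sum>i\<in>{1..N}. u i * demand E head f i) = (\<Sum>i\<in>{1..N}. \<Sum>e\<in>E. u i * c e i)"
    by (simp add: demand_eq[OF g] c_def sum_distrib_left)
  also have "\<dots> = (\<Sum>e\<in>E. \<Sum>i\<in>{1..N}. u i * c e i)" by (rule sum.swap)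
  also have "\<dots> = (\<Sum>e\<in>E. f e * (if head e = Min e then 1 else -1) * (u (Min e) - u (Max e)))"
  proof (rule sum.cong[OF refl])
    fix e assume eE: "e \<in> E"
    note ef = edge_facts[OF g eE]
    have "(\<Sum>i\<in>{1..N}. u i * c e i) = (\<Sum>i\<in>e. u i * c e i)"
      by (rule sum.mono_neutral_right) (use ef(5) in \<open>auto simp: c_def\<close>)
    also have "\<dots> = u (Min e) * c e (Min e) + u (Max e) * c e (Max e)"
      using ef(3) by (subst ef(4)) simp
    also have "\<dots> = f e * (if head e = Min e then 1 else -1) * (u (Min e) - u (Max e))"
    proof -
      have h: "head e = Min e \<or> head e = Max e" using o eE ef(4) unfolding is_orientation_def by blast
      have mi: "Min e \<in> e" "Max e \<in> e" using ef(4) by auto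
      show ?thesis using h ef(3) mi unfolding c_def by (auto simp: algebra_simps)
    qed
    finally show "(\<Sum>i\<in>{1..N}. u i * c e i) = f e * (if head e = Min e then 1 else -1) * (u (Min e) - u (Max e))" .
  qed
  finally show ?thesis .
qed

theorem theorem2:
  fixes N :: nat and E :: "nat set set" and W :: "nat \<Rightarrow> nat \<Rightarrow> real"
    and head :: "nat set \<Rightarrow> nat" and F :: "nat set set" and M :: "nat set"
    and x xhat :: "nat \<Rightarrow> real"
  assumes graph: "is_graph N E W"
    and orient: "is_orientation E head"
    and part: "is_partition {1..N} F"
    and Msub: "M \<subseteq> {1..N}"
    and nnsp: "NNSP N E W head F M 2"
    and feas: "\<forall>i\<in>M. xhat i = x i"
    and opt: "\<forall>xt :: nat \<Rightarrow> real. (\<forall>i\<in>M. xt i = x i) \<longrightarrow> tv E W xhat \<le> tv E W xt"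
  shows "tv E W (\<lambda>i. xhat i - x i)
           \<le> 6 * (INF a \<in> (UNIV :: (nat set \<Rightarrow> real) set).
                    tv E W (\<lambda>i. x i - (\<Sum>C\<in>F. a C * indicator C i)))"
proof -
  define u where "u = (\<lambda>i. xhat i - x i)"
  define w where "w = edge_weight W"
  define B where "B = boundary E F"
  define \<rho> where "\<rho> e = (if head e = Min e then 1 else -1::real)" for e
  have finE: "finite E" using finite_E[OF graph] .
  have BE: "B \<subseteq> E" unfolding B_def boundary_def by auto
  have w0: "\<And>e. 0 \<le> w e" using graph unfolding w_def edge_weight_def is_graph_def by auto
  have tvsplit: "tv E W g = (\<Sum>e\<in>B. w e * \<bar>g (Min e) - g (Max e)\<bar>) + (\<Sum>e\<in>E-B. w e * \<bar>g (Min e) - g (Max e)\<bar>)" for g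
    unfolding tv_def w_def using sum.subset_diff[OF BE finE, of "\<lambda>e. edge_weight W e * \<bar>g (Min e) - g (Max e)\<bar>"] by simp
  have key: "2 * (\<Sum>e\<in>B. w e * \<bar>u (Min e) - u (Max e)\<bar>) \<le> (\<Sum>e\<in>E-B. w e * \<bar>u (Min e) - u (Max e)\<bar>)"
  proof -
    define \<sigma> where "\<sigma> e = (if 0 \<le> \<rho> e * (u (Min e) - u (Max e)) then 1 else -1::real)" for e
    obtain f where f1: "\<forall>i\<in>{1..N}. i \<notin> M \<longrightarrow> demand E head f i = 0"
      and f2: "\<forall>e\<in>B. f e = 2 * \<sigma> e * w e"
      and f3: "\<forall>e\<in>E - B. \<bar>f e\<bar> \<le> w e"
    proof -
      have "\<forall>e\<in>boundary E F. \<sigma> e \<in> {-1, 1}" by (simp add: \<sigma>_def)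
      then show ?thesis using nnsp that unfolding NNSP_def B_def w_def by blast
    qed
    have "0 = (\<Sum>i\<in>{1..N}. u i * demand E head f i)"
      by (rule sym, rule sum.neutral) (use f1 feas in \<open>auto simp: u_def\<close>)
    also have "\<dots> = (\<Sum>e\<in>E. f e * \<rho> e * (u (Min e) - u (Max e)))"
      unfolding \<rho>_def by (rule flow_identity[OF graph orient])
    also have "\<dots> = (\<Sum>e\<in>B. f e * \<rho> e * (u (Min e) - u (Max e))) + (\<Sum>e\<in>E-B. f e * \<rho> e * (u (Min e) - u (Max e)))"
      using sum.subset_diff[OF BE finE, of "\<lambda>e. f e * \<rho> e * (u (Min e) - u (Max e))"] by simp
    finally have z: "0 = (\<Sum>e\<in>B. f e * \<rho> e * (u (Min e) - u (Max e))) + (\<Sum>e\<in>E-B. f e * \<rho> e * (u (Min e) - u (Max e)))" .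
    have b: "(\<Sum>e\<in>B. f e * \<rho> e * (u (Min e) - u (Max e))) = (\<Sum>e\<in>B. 2 * (w e * \<bar>u (Min e) - u (Max e)\<bar>))"
    proof (rule sum.cong[OF refl])
      fix e assume "e \<in> B"
      then have fe: "f e = 2 * \<sigma> e * w e" using f2 by auto
      have "\<sigma> e * (\<rho> e * (u (Min e) - u (Max e))) = \<bar>u (Min e) - u (Max e)\<bar>"
        unfolding \<sigma>_def \<rho>_def by (auto simp: abs_if)
      then show "f e * \<rho> e * (u (Min e) - u (Max e)) = 2 * (w e * \<bar>u (Min e) - u (Max e)\<bar>)"
        unfolding fe by (metis mult.assoc mult.left_commute)
    qed
    have i: "(\<Sum>e\<in>E-B. - (w e * \<bar>u (Min e) - u (Max e)\<bar>)) \<le> (\<Sum>e\<in>E-B. f e * \<rho> e * (u (Min e) - u (Max e)))"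
    proof (rule sum_mono)
      fix e assume eI: "e \<in> E - B"
      have "\<bar>f e * \<rho> e * (u (Min e) - u (Max e))\<bar> = \<bar>f e\<bar> * \<bar>u (Min e) - u (Max e)\<bar>"
        unfolding \<rho>_def by (simp add: abs_mult)
      also have "\<dots> \<le> w e * \<bar>u (Min e) - u (Max e)\<bar>"
        using f3 eI by (intro mult_right_mono) auto
      finally show "- (w e * \<bar>u (Min e) - u (Max e)\<bar>) \<le> f e * \<rho> e * (u (Min e) - u (Max e))"
        by linarith
    qed
    show ?thesis using z b i by (simp add: sum_distrib_left sum_negf)
  qed
  have bound: "tv E W u \<le> 6 * tv E W (\<lambda>i. x i - (\<Sum>C\<in>F. a C * indicator C i))" for a :: "nat set \<Rightarrow> real"
  proof -
    define xc where "xc i = (\<Sum>C\<in>F. a C * indicator C i)" for i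
    define y where "y i = x i - xc i" for i
    have int: "xc (Min e) = xc (Max e)" if eI: "e \<in> E - B" for e
    proof -
      have eE: "e \<in> E" using eI by auto
      note ef = edge_facts[OF graph eE]
      obtain C1 where C1: "C1 \<in> F" "Min e \<in> C1" using part ef(1) unfolding is_partition_def by blast
      obtain C2 where C2: "C2 \<in> F" "Max e \<in> C2" using part ef(2) unfolding is_partition_def by blast
      have "C1 = C2"
      proof (rule ccontr)
        assume "C1 \<noteq> C2"
        then have "e \<in> B" unfolding B_def boundary_def using eE C1 C2 ef(4) by blast
        then show False using eI by auto
      qed
      have "indicator C (Min e) = (indicator C (Max e) :: real)" if "C \<in> F" for C
      proof (cases "C = C1")
        case True then show ?thesis using C1 C2 \<open>C1 = C2\<close> by simp
      next
        case False
        then have "C \<inter> C1 = {}" using part that C1 unfolding is_partition_def by blast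
        then show ?thesis using C1 C2 \<open>C1 = C2\<close> by (auto simp: indicator_def)
      qed
      then show ?thesis unfolding xc_def by (intro sum.cong) auto
    qed
    have opt1: "tv E W xhat \<le> tv E W x" using opt by auto
    have Ix: "(\<Sum>e\<in>E-B. w e * \<bar>x (Min e) - x (Max e)\<bar>) = (\<Sum>e\<in>E-B. w e * \<bar>y (Min e) - y (Max e)\<bar>)"
      by (rule sum.cong[OF refl]) (use int in \<open>auto simp: y_def\<close>)
    have yB: "0 \<le> (\<Sum>e\<in>B. w e * \<bar>y (Min e) - y (Max e)\<bar>)" using w0 by (intro sum_nonneg) auto
    have h1: "(\<Sum>e\<in>B. w e * \<bar>x (Min e) - x (Max e)\<bar> - w e * \<bar>u (Min e) - u (Max e)\<bar>)
        \<le> (\<Sum>e\<in>B. w e * \<bar>xhat (Min e) - xhat (Max e)\<bar>)"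
    proof (rule sum_mono)
      fix e
      have "\<bar>x (Min e) - x (Max e)\<bar> - \<bar>u (Min e) - u (Max e)\<bar> \<le> \<bar>xhat (Min e) - xhat (Max e)\<bar>"
        unfolding u_def by linarith
      from mult_left_mono[OF this w0[of e]]
      show "w e * \<bar>x (Min e) - x (Max e)\<bar> - w e * \<bar>u (Min e) - u (Max e)\<bar> \<le> w e * \<bar>xhat (Min e) - xhat (Max e)\<bar>"
        by (simp add: algebra_simps)
    qed
    have h2: "(\<Sum>e\<in>E-B. w e * \<bar>u (Min e) - u (Max e)\<bar> - w e * \<bar>x (Min e) - x (Max e)\<bar>)
        \<le> (\<Sum>e\<in>E-B. w e * \<bar>xhat (Min e) - xhat (Max e)\<bar>)"
    proof (rule sum_mono)
      fix e
      have "\<bar>u (Min e) - u (Max e)\<bar> - \<bar>x (Min e) - x (Max e)\<bar> \<le> \<bar>xhat (Min e) - xhat (Max e)\<bar>"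
        unfolding u_def by linarith
      from mult_left_mono[OF this w0[of e]]
      show "w e * \<bar>u (Min e) - u (Max e)\<bar> - w e * \<bar>x (Min e) - x (Max e)\<bar> \<le> w e * \<bar>xhat (Min e) - xhat (Max e)\<bar>"
        by (simp add: algebra_simps)
    qed
    have tvy: "tv E W (\<lambda>i. x i - (\<Sum>C\<in>F. a C * indicator C i)) = tv E W y"
      unfolding y_def xc_def by simp
    show ?thesis
      using key opt1 Ix yB h1 h2 tvsplit[of u] tvsplit[of x] tvsplit[of xhat] tvsplit[of y] tvy
      by (simp add: sum_subtractf)
  qed
  have nn: "tv E W u \<le> 6 * t" if "t \<in> (\<lambda>a. tv E W (\<lambda>i. x i - (\<Sum>C\<in>F. a C * indicator C i))) ` UNIV" for t
    using that bound by auto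
  have "tv E W u / 6 \<le> (INF a \<in> (UNIV :: (nat set \<Rightarrow> real) set).
                    tv E W (\<lambda>i. x i - (\<Sum>C\<in>F. a C * indicator C i)))"
  proof (rule cINF_greatest)
    fix a :: "nat set \<Rightarrow> real" assume "a \<in> UNIV"
    show "tv E W u / 6 \<le> tv E W (\<lambda>i. x i - (\<Sum>C\<in>F. a C * indicator C i))"
      using bound[of a] by linarith
  qed simp
  then show ?thesis unfolding u_def by simp
qed

end
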